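(* Let $n_0$ be a nonnegative bounded measurable function on $(0,\infty)$ with $\lim_{x\to\infty}x^2n_0(x)=0$, and let $n$ be the global solution of the Kompaneets problem with initial data $n_0$. If $n_0$ is not identically $0$, then $n_t(x)>0$ for every $x>0$, $t>0$.
   Context: The Kompaneets problem: for $x>0$, $t>0$, $\partial_t n = \partial_x J$ with $J(x,n) = x^2\partial_x n + (x^2-2x)n + n^2$, together with $\lim_{x\to\infty} J(x,n_t)=0$; no boundary condition at $x=0$. $n_t(x)=n(x,t)$; the global solution is the unique nonnegative solution in $C([0,\infty);L^1)\cap L^\infty_{loc}([0,\infty);L^\infty)\cap C^{2,1}((0,\infty)^2)$. *)

theory Defs
  imports "HOL-Analysis.Analysis"
begin

text \<open>Kompaneets flux J(x,n) = x^2 n_x + (x^2 - 2x) n + n^2, written in terms of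
  the value v = n(x,t) and the space derivative d = n_x(x,t).\<close>
definition kflux :: "real \<Rightarrow> real \<Rightarrow> real \<Rightarrow> real" where
  "kflux x v d = x\<^sup>2 * d + (x\<^sup>2 - 2 * x) * v + v\<^sup>2"

text \<open>n :: real => real => real, n x t = n_t(x).\<close>
definition kompaneets_solution :: "(real \<Rightarrow> real) \<Rightarrow> (real \<Rightarrow> real \<Rightarrow> real) \<Rightarrow> bool" where
  "kompaneets_solution n0 n \<longleftrightarrow>
     \<comment> \<open>nonnegativity\<close>
     (\<forall>x>0. \<forall>t>0. n x t \<ge> 0) \<and>
     \<comment> \<open>initial datum\<close>
     (AE x in lborel. x > 0 \<longrightarrow> n x 0 = n0 x) \<and>
     \<comment> \<open>C([0,oo); L^1)\<close>
     (\<forall>t\<ge>0. set_integrable lborel {0<..} (\<lambda>x. n x t)) \<and>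
     (\<forall>t\<ge>0. ((\<lambda>s. LINT x:{0<..}|lborel. \<bar>n x s - n x t\<bar>) \<longlongrightarrow> 0) (at t within {0..})) \<and>
     \<comment> \<open>L^oo_loc([0,oo); L^oo)\<close>
     (\<forall>T\<ge>0. \<exists>M. \<forall>t\<in>{0..T}. AE x in lborel. x > 0 \<longrightarrow> \<bar>n x t\<bar> \<le> M) \<and>
     \<comment> \<open>C^{2,1}((0,oo)^2) and the equation d_t n = d_x J\<close>
     (\<exists>nx nxx nt.
        continuous_on ({0<..} \<times> {0<..}) (\<lambda>(x,t). n x t) \<and>
        continuous_on ({0<..} \<times> {0<..}) (\<lambda>(x,t). nx x t) \<and>
        continuous_on ({0<..} \<times> {0<..}) (\<lambda>(x,t). nxx x t) \<and>
        continuous_on ({0<..} \<times> {0<..}) (\<lambda>(x,t). nt x t) \<and>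
        (\<forall>x>0. \<forall>t>0.
           ((\<lambda>y. n y t) has_real_derivative nx x t) (at x) \<and>
           ((\<lambda>y. nx y t) has_real_derivative nxx x t) (at x) \<and>
           ((\<lambda>s. n x s) has_real_derivative nt x t) (at t) \<and>
           ((\<lambda>y. kflux y (n y t) (nx y t)) has_real_derivative nt x t) (at x)) \<and>
        \<comment> \<open>no-flux condition at infinity\<close>
        (\<forall>t>0. ((\<lambda>x. kflux x (n x t) (nx x t)) \<longlongrightarrow> 0) at_top))"

end

theory Submission
  imports Defs
begin


lemma min2_lemma:
  fixes f f' :: "real \<Rightarrow> real"
  assumes d: "d > 0" and mn: "\<forall>y. \<bar>y - x\<bar> < d \<longrightarrow> f x \<le> f y"
    and der: "\<forall>y. \<bar>y - x\<bar> < d \<longrightarrow> (f has_real_derivative f' y) (at y)"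
    and der2: "(f' has_real_derivative f2) (at x)"
  shows "f' x = 0 \<and> f2 \<ge> 0"
proof -
  have f'0: "f' x = 0"
    using DERIV_local_min[OF der[rule_format, of x] d] mn d by (auto simp: abs_minus_commute)
  moreover have "f2 \<ge> 0"
  proof (rule ccontr)
    assume "\<not> f2 \<ge> 0"
    then have "f2 < 0" by simp
    from DERIV_neg_dec_right[OF der2 this] obtain e where e: "e > 0"
      "\<forall>h>0. h < e \<longrightarrow> f' (x + h) < f' x" by blast
    define h where "h = min e d / 2"
    have h: "h > 0" "h < e" "h < d" using e d by (auto simp: h_def)
    have "\<exists>z. x < z \<and> z < x + h \<and> f (x + h) - f x = (x + h - x) * f' z"
      apply (rule MVT2) using h der by auto
    then obtain z where z: "x < z" "z < x + h" "f (x + h) - f x = h * f' z" by auto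
    have "f' z < 0" using e(2)[rule_format, of "z - x"] z h f'0 by auto
    then have "h * f' z < 0" using h by (simp add: mult_pos_neg)
    then have "f (x + h) < f x" using z by linarith
    moreover have "f x \<le> f (x + h)" using mn h by auto
    ultimately show False by simp
  qed
  ultimately show ?thesis by simp
qed

lemma time_lemma:
  fixes h :: "real \<Rightarrow> real"
  assumes der: "(h has_real_derivative l) (at t)" and d: "d > 0"
    and mn: "\<forall>\<tau>. t - d < \<tau> \<and> \<tau> \<le> t \<longrightarrow> h t \<le> h \<tau>"
  shows "l \<le> 0"
proof (rule ccontr)
  assume "\<not> l \<le> 0"
  then have "l > 0" by simp
  from DERIV_pos_inc_left[OF der this] obtain e where e: "e > 0"
    "\<forall>k>0. k < e \<longrightarrow> h (t - k) < h t" by blast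
  define k where "k = min e d / 2"
  have "k > 0" "k < e" "k < d" using e d by (auto simp: k_def)
  then show False using e(2) mn[rule_format, of "t - k"] by force
qed

lemma barrier_ineq:
  fixes a b y u r A1 A2 B v K Q u2 :: real
  assumes "0<r" "0<A1" "A1 \<le> a" "a \<le> A2" "\<bar>b\<bar> \<le> B" "\<bar>y\<bar> \<le> r" "u = r\<^sup>2 - y\<^sup>2"
    "Q = 4*A2 + 4*r*(\<bar>v\<bar>+B)" "u2 = min (4*A1*r\<^sup>2/Q) (r\<^sup>2/2)" "K = 2 + Q/u2"
  shows "0 \<le> (K-2)*u\<^sup>2 + 8*a*y\<^sup>2 - 4*a*u - 4*y*(b+v)*u"
proof -
  have B0: "B \<ge> 0" using assms by linarith
  have Qpos: "Q > 0" using assms B0 by (simp add: add_pos_nonneg)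
  have u0: "u \<ge> 0" "u \<le> r\<^sup>2" using assms
    by (auto simp: abs_le_square_iff[symmetric] abs_of_pos)
  have yb: "\<bar>y*(b+v)\<bar> \<le> r*(\<bar>v\<bar>+B)"
  proof -
    have "\<bar>y*(b+v)\<bar> = \<bar>y\<bar>*\<bar>b+v\<bar>" by (simp add: abs_mult)
    also have "\<dots> \<le> r*(\<bar>v\<bar>+B)" apply (rule mult_mono) using assms by (auto simp: abs_triangle_ineq[THEN order_trans])
    finally show ?thesis .
  qed
  have T: "4*a*u + 4*y*(b+v)*u \<le> Q*u"
  proof -
    have "4*a*u \<le> 4*A2*u" using assms u0 by (simp add: mult_right_mono)
    moreover have "4*(y*(b+v))*u \<le> 4*(r*(\<bar>v\<bar>+B))*u" using yb u0
      by (intro mult_right_mono) auto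
    moreover have "Q*u = 4*A2*u + 4*(r*(\<bar>v\<bar>+B))*u" using assms by (simp add: distrib_right)
    moreover have "4*y*(b+v)*u = 4*(y*(b+v))*u" by (simp add: mult.assoc)
    ultimately show ?thesis by linarith
  qed
  have u2pos: "u2 > 0" using assms Qpos by auto
  show ?thesis
  proof (cases "u \<le> u2")
    case True
    then have "u \<le> 4*A1*r\<^sup>2/Q" "u \<le> r\<^sup>2/2" using assms by auto
    then have "Q*u \<le> 4*A1*r\<^sup>2" using Qpos by (simp add: field_simps)
    moreover have "y\<^sup>2 \<ge> r\<^sup>2/2" using \<open>u \<le> r\<^sup>2/2\<close> assms by simp
    moreover have "8*a*y\<^sup>2 \<ge> 8*A1*y\<^sup>2" using assms by (simp add: mult_right_mono)
    moreover have "(K-2)*u\<^sup>2 \<ge> 0" using assms u2pos Qpos by simp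
    moreover have "8*A1*y\<^sup>2 \<ge> 8*A1*(r\<^sup>2/2)" using \<open>y\<^sup>2 \<ge> r\<^sup>2/2\<close> assms
      by (intro mult_left_mono) auto
    ultimately show ?thesis using T by linarith
  next
    case False
    then have "(K-2)*u\<^sup>2 = Q*u*(u/u2)" using assms u2pos by (simp add: power2_eq_square)
    moreover have "u/u2 \<ge> 1" using False u2pos by simp
    moreover have "Q*u \<ge> 0" using Qpos u0 by simp
    ultimately have "(K-2)*u\<^sup>2 \<ge> Q*u" by (metis mult_cancel_left1 mult_left_mono)
    moreover have "8*a*y\<^sup>2 \<ge> 0" using assms by simp
    ultimately show ?thesis using T by linarith
  qed
qed



lemma pde_form:
  assumes "((\<lambda>y. n y t) has_real_derivative nx x t) (at x)"
    "((\<lambda>y. nx y t) has_real_derivative nxx x t) (at x)"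
    "((\<lambda>y. kflux y (n y t) (nx y t)) has_real_derivative nt x t) (at x)"
  shows "nt x t = x\<^sup>2 * nxx x t + (x\<^sup>2 + 2 * n x t) * nx x t + (2*x - 2) * n x t"
proof -
  have "((\<lambda>y. kflux y (n y t) (nx y t)) has_real_derivative
     (2*x*nx x t + x\<^sup>2*nxx x t + ((2*x - 2) * n x t + (x\<^sup>2 - 2*x) * nx x t) + 2 * n x t * nx x t)) (at x)"
    unfolding kflux_def
    by (rule derivative_eq_intros assms(1,2) refl | simp)+
  from DERIV_unique[OF assms(3) this] show ?thesis by (simp add: algebra_simps power2_eq_square)
qed

lemma w_derivs:
  fixes eps K s x1 v r :: real
  defines "E \<equiv> \<lambda>t. eps * exp (-K*(t-s))"
  defines "Yf \<equiv> \<lambda>x t. x - (x1 + v * (t - s))"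
  shows "((\<lambda>y. E t * (r\<^sup>2 - (Yf y t)\<^sup>2)\<^sup>2) has_real_derivative (-4 * E t * Yf x t * (r\<^sup>2 - (Yf x t)\<^sup>2))) (at x)"
    and "((\<lambda>y. -4 * E t * Yf y t * (r\<^sup>2 - (Yf y t)\<^sup>2)) has_real_derivative (E t * (8*(Yf x t)\<^sup>2 - 4*(r\<^sup>2 - (Yf x t)\<^sup>2)))) (at x)"
    and "((\<lambda>\<tau>. E \<tau> * (r\<^sup>2 - (Yf x \<tau>)\<^sup>2)\<^sup>2) has_real_derivative (E t * (-K*(r\<^sup>2 - (Yf x t)\<^sup>2)\<^sup>2 + 4 * v * Yf x t*(r\<^sup>2 - (Yf x t)\<^sup>2)))) (at t)"
  unfolding E_def Yf_def
  subgoal by (rule derivative_eq_intros refl | simp)+ (simp add: algebra_simps power2_eq_square)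
  subgoal by (rule derivative_eq_intros refl | simp)+ (simp add: algebra_simps power2_eq_square)
  subgoal by (rule derivative_eq_intros refl | simp)+ (simp add: algebra_simps power2_eq_square)
  done



lemma comparison:
  fixes n nx nxx nt :: "real \<Rightarrow> real \<Rightarrow> real"
  assumes cont: "continuous_on ({0<..} \<times> {0<..}) (\<lambda>(x,t). n x t)"
  and dx: "\<forall>x>0. \<forall>t>0. ((\<lambda>y. n y t) has_real_derivative nx x t) (at x)"
  and dxx: "\<forall>x>0. \<forall>t>0. ((\<lambda>y. nx y t) has_real_derivative nxx x t) (at x)"
  and dt: "\<forall>x>0. \<forall>t>0. ((\<lambda>\<tau>. n x \<tau>) has_real_derivative nt x t) (at t)"
  and pde: "\<forall>x>0. \<forall>t>0. nt x t = x\<^sup>2 * nxx x t + (x\<^sup>2 + 2 * n x t) * nx x t + (2*x - 2) * n x t"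
  and nonneg: "\<forall>x>0. \<forall>t>0. n x t \<ge> 0"
  and x0: "x0 > 0" and x1: "x1 > 0" and s: "0 < s" "s < T" and pos: "n x1 s > 0"
  shows "n x0 T > 0"
proof -
  define p where "p = n x1 s"
  have p: "p > 0" using pos by (simp add: p_def)
  have "isCont (\<lambda>y. n y s) x1" using dx x1 s by (meson DERIV_isCont)
  then obtain r0 where r0: "r0 > 0" "\<forall>y. dist y x1 < r0 \<longrightarrow> dist (n y s) (n x1 s) < p/2"
    using p unfolding continuous_at_eps_delta by (metis half_gt_zero)
  have r0': "\<forall>y. \<bar>y - x1\<bar> < r0 \<longrightarrow> n y s > p/2"
  proof (intro allI impI)
    fix y assume "\<bar>y - x1\<bar> < r0"
    then have "dist (n y s) (n x1 s) < p/2" using r0 by (simp add: dist_real_def)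
    then have "\<bar>n y s - p\<bar> < p/2" by (simp add: dist_real_def p_def)
    then show "n y s > p/2" by linarith
  qed
  define r where "r = min (r0/2) (min x0 x1 / 2)"
  have r: "r > 0" "r < r0" "r \<le> min x0 x1 / 2" using r0 x0 x1 by (auto simp: r_def)
  define v where "v = (x0 - x1)/(T - s)"
  define \<xi> where "\<xi> = (\<lambda>t. x1 + v * (t - s))"
  have \<xi>s: "\<xi> s = x1" by (simp add: \<xi>_def)
  have \<xi>T: "\<xi> T = x0" using s by (simp add: \<xi>_def v_def)
  have \<xi>b: "min x0 x1 \<le> \<xi> t \<and> \<xi> t \<le> max x0 x1" if "s \<le> t" "t \<le> T" for t
  proof -
    define \<theta> where "\<theta> = (t - s)/(T - s)"
    have th: "0 \<le> \<theta>" "\<theta> \<le> 1" using that s by (auto simp: \<theta>_def field_simps)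
    have "\<xi> t = x1 + (x0 - x1) * \<theta>" using s by (simp add: \<xi>_def v_def \<theta>_def)
    moreover have "x1 + (x0 - x1) * \<theta> = (1 - \<theta>) * x1 + \<theta> * x0" by (simp add: algebra_simps)
    moreover have "min x0 x1 \<le> (1 - \<theta>) * x1 + \<theta> * x0 \<and> (1 - \<theta>) * x1 + \<theta> * x0 \<le> max x0 x1"
    proof -
      have "(1 - \<theta>) * min x0 x1 \<le> (1 - \<theta>) * x1" "\<theta> * min x0 x1 \<le> \<theta> * x0"
           "(1 - \<theta>) * x1 \<le> (1 - \<theta>) * max x0 x1" "\<theta> * x0 \<le> \<theta> * max x0 x1"
        using th by (auto intro!: mult_left_mono)
      then show ?thesis by (simp add: algebra_simps)
    qed
    ultimately show ?thesis by simp
  qed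
  define lo where "lo = min x0 x1 / 2"
  define hi where "hi = max x0 x1 + r"
  have lo: "lo > 0" using x0 x1 by (simp add: lo_def)
  define D where "D = ({lo..hi} \<times> {s..T}) \<inter> {z. \<bar>fst z - \<xi> (snd z)\<bar> \<le> r}"
  have inD: "(x,t) \<in> D" if "s \<le> t" "t \<le> T" "\<bar>x - \<xi> t\<bar> \<le> r" for x t
    using \<xi>b[OF that(1,2)] that r by (auto simp: D_def lo_def hi_def abs_le_iff)
  have Dp: "s \<le> t \<and> t \<le> T \<and> \<bar>x - \<xi> t\<bar> \<le> r \<and> lo \<le> x \<and> x \<le> hi" if "(x,t) \<in> D" for x t
    using that by (auto simp: D_def)
  have Dsub: "D \<subseteq> {0<..} \<times> {0<..}" using Dp lo s by force
  have compD: "compact D" unfolding D_def \<xi>_def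
    by (intro compact_Int_closed compact_Times compact_Icc closed_Collect_le continuous_intros)
  have Dne: "D \<noteq> {}" using inD[of s x1] s r by (auto simp: \<xi>s)
  have contn: "continuous_on D (\<lambda>z. n (fst z) (snd z))"
    using continuous_on_subset[OF cont Dsub] by (simp add: case_prod_beta)
  obtain zB where zB: "zB \<in> D" "\<forall>z\<in>D. \<bar>(fst z)\<^sup>2 + 2 * n (fst z) (snd z)\<bar> \<le> \<bar>(fst zB)\<^sup>2 + 2 * n (fst zB) (snd zB)\<bar>"
  proof -
    have "continuous_on D (\<lambda>z. \<bar>(fst z)\<^sup>2 + 2 * n (fst z) (snd z)\<bar>)"
      using contn by (intro continuous_intros) auto
    from continuous_attains_sup[OF compD Dne this] show ?thesis using that by blast
  qed
  define B where "B = \<bar>(fst zB)\<^sup>2 + 2 * n (fst zB) (snd zB)\<bar>"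
  define A1 where "A1 = lo\<^sup>2"
  define A2 where "A2 = hi\<^sup>2"
  define Q where "Q = 4*A2 + 4*r*(\<bar>v\<bar>+B)"
  define u2 where "u2 = min (4*A1*r\<^sup>2/Q) (r\<^sup>2/2)"
  define K where "K = 2 + Q/u2"
  define eps where "eps = p / (2 * r^4)"
  define E where "E = (\<lambda>t. eps * exp (-K*(t-s)))"
  define Yf where "Yf = (\<lambda>x t. x - (x1 + v * (t - s)))"
  define w where "w = (\<lambda>x t. E t * (r\<^sup>2 - (Yf x t)\<^sup>2)\<^sup>2)"
  define lam where "lam = 2 * hi"
  define F where "F = (\<lambda>z. exp (-lam * snd z) * (n (fst z) (snd z) - w (fst z) (snd z)))"
  have Yf\<xi>: "Yf x t = x - \<xi> t" for x t by (simp add: Yf_def \<xi>_def)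
  have Epos: "E t > 0" for t using p r by (simp add: E_def eps_def)
  have contF: "continuous_on D F"
    unfolding F_def w_def E_def Yf_def using contn by (intro continuous_intros) auto
  obtain zm where zm: "zm \<in> D" "\<forall>z\<in>D. F zm \<le> F z"
    using continuous_attains_inf[OF compD Dne contF] by blast
  have Fnn: "F zm \<ge> 0"
  proof (rule ccontr)
    assume neg: "\<not> F zm \<ge> 0"
    obtain xs ts where zs: "zm = (xs, ts)" by (cases zm)
    have nw: "n xs ts < w xs ts" using neg unfolding F_def zs
      by (simp add: zero_le_mult_iff)
    have dp: "s \<le> ts" "ts \<le> T" "\<bar>xs - \<xi> ts\<bar> \<le> r" "lo \<le> xs" "xs \<le> hi" using Dp zm(1) zs by auto
    have xs0: "xs > 0" using dp lo by simp
    have ts0: "ts > 0" using dp s by simp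
    have "ts \<noteq> s"
    proof
      assume "ts = s"
      then have "\<bar>xs - x1\<bar> \<le> r" using dp \<xi>s by simp
      then have "n xs s > p/2" using r r0' by simp
      moreover have "w xs s \<le> p/2"
      proof -
        have y: "\<bar>Yf xs s\<bar> \<le> r" using \<open>\<bar>xs - x1\<bar> \<le> r\<close> by (simp add: Yf_def)
        have "0 \<le> r\<^sup>2 - (Yf xs s)\<^sup>2" "r\<^sup>2 - (Yf xs s)\<^sup>2 \<le> r\<^sup>2" using y r
          by (auto simp: abs_le_square_iff[symmetric] abs_of_pos)
        then have "(r\<^sup>2 - (Yf xs s)\<^sup>2)\<^sup>2 \<le> (r\<^sup>2)\<^sup>2" by (intro power_mono) auto
        then have "w xs s \<le> eps * (r\<^sup>2)\<^sup>2" using p r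
          by (simp add: w_def E_def eps_def divide_simps)
        also have "\<dots> = p/2" using r by (simp add: eps_def power2_eq_square field_simps power4_eq_xxxx)
        finally show ?thesis .
      qed
      ultimately show False using nw \<open>ts = s\<close> by simp
    qed
    then have tss: "s < ts" using dp by simp
    have "\<bar>xs - \<xi> ts\<bar> \<noteq> r"
    proof
      assume "\<bar>xs - \<xi> ts\<bar> = r"
      then have "(Yf xs ts)\<^sup>2 = r\<^sup>2" by (metis Yf\<xi> power2_abs)
      then have "w xs ts = 0" by (simp add: w_def)
      then show False using nw nonneg xs0 ts0 by force
    qed
    then have ylt: "\<bar>xs - \<xi> ts\<bar> < r" using dp by simp
    define d where "d = r - \<bar>xs - \<xi> ts\<bar>"
    have d: "d > 0" using ylt by (simp add: d_def)
    define wx where "wx = (\<lambda>y t. -4 * E t * Yf y t * (r\<^sup>2 - (Yf y t)\<^sup>2))"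
    define wxx where "wxx = (\<lambda>y t. E t * (8*(Yf y t)\<^sup>2 - 4*(r\<^sup>2 - (Yf y t)\<^sup>2)))"
    define wt where "wt = (\<lambda>y t. E t * (-K*(r\<^sup>2 - (Yf y t)\<^sup>2)\<^sup>2 + 4 * v * Yf y t*(r\<^sup>2 - (Yf y t)\<^sup>2)))"
    have WD: "((\<lambda>y. w y t) has_real_derivative wx x t) (at x)"
      "((\<lambda>y. wx y t) has_real_derivative wxx x t) (at x)"
      "((\<lambda>\<tau>. w x \<tau>) has_real_derivative wt x t) (at t)" for x t
      unfolding w_def wx_def wxx_def wt_def E_def Yf_def using w_derivs by auto
    have sp_in: "(y, ts) \<in> D" if "\<bar>y - xs\<bar> < d" for y
      using that dp by (intro inD) (auto simp: d_def)
    have h1: "\<forall>y. \<bar>y - xs\<bar> < d \<longrightarrow> n xs ts - w xs ts \<le> n y ts - w y ts"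
    proof (intro allI impI)
      fix y assume "\<bar>y - xs\<bar> < d"
      then have "F zm \<le> F (y, ts)" using zm sp_in by blast
      then show "n xs ts - w xs ts \<le> n y ts - w y ts" by (simp add: F_def zs)
    qed
    have h2: "\<forall>y. \<bar>y - xs\<bar> < d \<longrightarrow> ((\<lambda>y. n y ts - w y ts) has_real_derivative nx y ts - wx y ts) (at y)"
    proof (intro allI impI)
      fix y assume "\<bar>y - xs\<bar> < d"
      then have "y > 0" using sp_in Dp lo by fastforce
      then show "((\<lambda>y. n y ts - w y ts) has_real_derivative nx y ts - wx y ts) (at y)"
        using dx ts0 WD by (intro DERIV_diff) auto
    qed
    have h3: "((\<lambda>y. nx y ts - wx y ts) has_real_derivative nxx xs ts - wxx xs ts) (at xs)"
      using dxx ts0 xs0 WD by (intro DERIV_diff) auto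
    have sp: "nx xs ts - wx xs ts = 0 \<and> nxx xs ts - wxx xs ts \<ge> 0"
      using min2_lemma[OF d h1 h2 h3] by simp
    define d' where "d' = min (ts - s) (d / (\<bar>v\<bar> + 1))"
    have d': "d' > 0" using tss d by (simp add: d'_def)
    have tm_in: "(xs, \<tau>) \<in> D" if "ts - d' < \<tau>" "\<tau> \<le> ts" for \<tau>
    proof (rule inD)
      show "s \<le> \<tau>" "\<tau> \<le> T" using that dp by (auto simp: d'_def)
      have "ts - \<tau> < d / (\<bar>v\<bar> + 1)" using that by (simp add: d'_def)
      then have "(\<bar>v\<bar> + 1) * (ts - \<tau>) < d" by (simp add: field_simps add_pos_nonneg)
      moreover have "(\<bar>v\<bar> + 1) * (ts - \<tau>) = \<bar>v\<bar> * (ts - \<tau>) + (ts - \<tau>)" by (simp add: distrib_right)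
      ultimately have "\<bar>v\<bar> * (ts - \<tau>) < d" using that by linarith
      moreover have "\<bar>xs - \<xi> \<tau>\<bar> \<le> \<bar>xs - \<xi> ts\<bar> + \<bar>v\<bar> * (ts - \<tau>)"
      proof -
        have "xs - \<xi> \<tau> = (xs - \<xi> ts) + v * (ts - \<tau>)" by (simp add: \<xi>_def algebra_simps)
        then have "\<bar>xs - \<xi> \<tau>\<bar> \<le> \<bar>xs - \<xi> ts\<bar> + \<bar>v * (ts - \<tau>)\<bar>" by (metis abs_triangle_ineq)
        also have "\<bar>v * (ts - \<tau>)\<bar> = \<bar>v\<bar> * (ts - \<tau>)" using that by (simp add: abs_mult)
        finally show ?thesis .
      qed
      ultimately show "\<bar>xs - \<xi> \<tau>\<bar> \<le> r" by (simp add: d_def)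
    qed
    have hder: "((\<lambda>\<tau>. exp (-lam * \<tau>) * (n xs \<tau> - w xs \<tau>)) has_real_derivative
        (exp (-lam * ts) * (-lam) * (n xs ts - w xs ts) + exp (-lam * ts) * (nt xs ts - wt xs ts))) (at ts)"
      using dt xs0 ts0 WD by (auto intro!: derivative_eq_intros)
    have "exp (-lam * ts) * (-lam) * (n xs ts - w xs ts) + exp (-lam * ts) * (nt xs ts - wt xs ts) \<le> 0"
    proof (rule time_lemma[OF hder d'])
      show "\<forall>\<tau>. ts - d' < \<tau> \<and> \<tau> \<le> ts \<longrightarrow> exp (- lam * ts) * (n xs ts - w xs ts) \<le> exp (- lam * \<tau>) * (n xs \<tau> - w xs \<tau>)"
      proof (intro allI impI)
        fix \<tau> assume "ts - d' < \<tau> \<and> \<tau> \<le> ts"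
        then have "F zm \<le> F (xs, \<tau>)" using zm tm_in by blast
        then show "exp (- lam * ts) * (n xs ts - w xs ts) \<le> exp (- lam * \<tau>) * (n xs \<tau> - w xs \<tau>)"
          by (simp add: F_def zs)
      qed
    qed
    then have "exp (-lam * ts) * ((nt xs ts - wt xs ts) - lam * (n xs ts - w xs ts)) \<le> 0"
      by (simp add: algebra_simps)
    then have T1: "nt xs ts - wt xs ts \<le> lam * (n xs ts - w xs ts)"
      by (simp add: mult_le_0_iff)
    define a where "a = xs\<^sup>2"
    define b where "b = xs\<^sup>2 + 2 * n xs ts"
    define c where "c = 2*xs - 2"
    define y where "y = Yf xs ts"
    define u where "u = r\<^sup>2 - y\<^sup>2"
    have bar: "0 \<le> (K-2)*u\<^sup>2 + 8*a*y\<^sup>2 - 4*a*u - 4*y*(b+v)*u"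
    proof (rule barrier_ineq[OF r(1) _ _ _ _ _ u_def Q_def u2_def K_def])
      show "0 < A1" using lo by (simp add: A1_def)
      show "A1 \<le> a" using dp lo by (simp add: A1_def a_def power_mono)
      show "a \<le> A2" using dp lo by (simp add: A2_def a_def power_mono)
      show "\<bar>b\<bar> \<le> B" using zB zm zs by (auto simp: b_def B_def)
      show "\<bar>y\<bar> \<le> r" using dp by (simp add: y_def Yf\<xi>)
    qed
    have wform: "w xs ts = E ts * u\<^sup>2" "wx xs ts = -4 * E ts * y * u" "wxx xs ts = E ts * (8*y\<^sup>2 - 4*u)"
      "wt xs ts = E ts * (-K*u\<^sup>2 + 4 * v * y * u)"
      by (simp_all add: w_def wx_def wxx_def wt_def u_def y_def)
    have "a * wxx xs ts + b * wx xs ts - 2 * w xs ts - wt xs ts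
       = E ts * ((K-2)*u\<^sup>2 + 8*a*y\<^sup>2 - 4*a*u - 4*y*(b+v)*u)"
      unfolding wform by (simp add: algebra_simps power2_eq_square)
    also have "\<dots> \<ge> 0" using bar Epos[of ts] by (intro mult_nonneg_nonneg) auto
    finally have W1: "wt xs ts \<le> a * wxx xs ts + b * wx xs ts - 2 * w xs ts" by simp
    have P1: "nt xs ts = a * nxx xs ts + b * nx xs ts + c * n xs ts"
      using pde xs0 ts0 by (simp add: a_def b_def c_def)
    have wnn: "w xs ts \<ge> 0" by (simp add: w_def Epos less_imp_le)
    have c2: "c + 2 \<ge> 0" using xs0 by (simp add: c_def)
    have a0: "a * (nxx xs ts - wxx xs ts) \<ge> 0" using sp by (simp add: a_def)
    have "nt xs ts - wt xs ts \<ge> a * (nxx xs ts - wxx xs ts) + b * (nx xs ts - wx xs ts) + c * (n xs ts - w xs ts) + (c + 2) * w xs ts"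
    proof -
      have "a * (nxx xs ts - wxx xs ts) + b * (nx xs ts - wx xs ts) + c * (n xs ts - w xs ts) + (c + 2) * w xs ts
          = a * nxx xs ts + b * nx xs ts + c * n xs ts - (a * wxx xs ts + b * wx xs ts - 2 * w xs ts)"
        by (simp add: right_diff_distrib distrib_right)
      then show ?thesis using P1 W1 by linarith
    qed
    moreover have "(c + 2) * w xs ts \<ge> 0" using c2 wnn by simp
    ultimately have "nt xs ts - wt xs ts \<ge> c * (n xs ts - w xs ts)" using a0 sp by simp
    with T1 have "c * (n xs ts - w xs ts) \<le> lam * (n xs ts - w xs ts)" by linarith
    then have "c \<ge> lam" using nw by (simp add: mult_le_cancel_right)
    moreover have "c < lam" using dp r by (simp add: c_def lam_def)
    ultimately show False by simp
  qed
  have "(x0, T) \<in> D" using inD[of T x0] s r by (simp add: \<xi>T)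
  then have "F zm \<le> F (x0, T)" using zm by blast
  then have "F (x0, T) \<ge> 0" using Fnn by simp
  then have "n x0 T \<ge> w x0 T" by (simp add: F_def zero_le_mult_iff)
  moreover have "w x0 T > 0" using Epos r \<xi>T by (simp add: w_def Yf\<xi>)
  ultimately show ?thesis by simp
qed



theorem lemma5p1:
  fixes n0 :: "real \<Rightarrow> real" and n :: "real \<Rightarrow> real \<Rightarrow> real"
  assumes n0_nonneg: "\<forall>x>0. n0 x \<ge> 0"
    and n0_bounded: "\<exists>M. \<forall>x>0. \<bar>n0 x\<bar> \<le> M"
    and n0_meas: "set_borel_measurable lborel {0<..} n0"
    and n0_decay: "((\<lambda>x. x\<^sup>2 * n0 x) \<longlongrightarrow> 0) at_top"
    and sol: "kompaneets_solution n0 n"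
    and nonzero: "\<not> (AE x in lborel. x > 0 \<longrightarrow> n0 x = 0)"
  shows "\<forall>x>0. \<forall>t>0. n x t > 0"
proof -
  have S: "(\<forall>x>0. \<forall>t>0. n x t \<ge> 0) \<and>
     (AE x in lborel. x > 0 \<longrightarrow> n x 0 = n0 x) \<and>
     (\<forall>t\<ge>0. set_integrable lborel {0<..} (\<lambda>x. n x t)) \<and>
     (\<forall>t\<ge>0. ((\<lambda>s. LINT x:{0<..}|lborel. \<bar>n x s - n x t\<bar>) \<longlongrightarrow> 0) (at t within {0..})) \<and>
     (\<forall>T\<ge>0. \<exists>M. \<forall>t\<in>{0..T}. AE x in lborel. x > 0 \<longrightarrow> \<bar>n x t\<bar> \<le> M) \<and>
     (\<exists>nx nxx nt.
        continuous_on ({0<..} \<times> {0<..}) (\<lambda>(x,t). n x t) \<and>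
        continuous_on ({0<..} \<times> {0<..}) (\<lambda>(x,t). nx x t) \<and>
        continuous_on ({0<..} \<times> {0<..}) (\<lambda>(x,t). nxx x t) \<and>
        continuous_on ({0<..} \<times> {0<..}) (\<lambda>(x,t). nt x t) \<and>
        (\<forall>x>0. \<forall>t>0.
           ((\<lambda>y. n y t) has_real_derivative nx x t) (at x) \<and>
           ((\<lambda>y. nx y t) has_real_derivative nxx x t) (at x) \<and>
           ((\<lambda>s. n x s) has_real_derivative nt x t) (at t) \<and>
           ((\<lambda>y. kflux y (n y t) (nx y t)) has_real_derivative nt x t) (at x)) \<and>
        (\<forall>t>0. ((\<lambda>x. kflux x (n x t) (nx x t)) \<longlongrightarrow> 0) at_top))"
    using sol[unfolded kompaneets_solution_def] .
  have nonneg: "\<forall>x>0. \<forall>t>0. n x t \<ge> 0" using S by (rule conjunct1)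
  have init: "AE x in lborel. x > 0 \<longrightarrow> n x 0 = n0 x" using S[THEN conjunct2] by (rule conjunct1)
  have integ: "\<forall>t\<ge>0. set_integrable lborel {0<..} (\<lambda>x. n x t)"
    using S[THEN conjunct2, THEN conjunct2] by (rule conjunct1)
  have L1: "\<forall>t\<ge>0. ((\<lambda>s. LINT x:{0<..}|lborel. \<bar>n x s - n x t\<bar>) \<longlongrightarrow> 0) (at t within {0..})"
    using S[THEN conjunct2, THEN conjunct2, THEN conjunct2] by (rule conjunct1)
  obtain nx nxx nt where H:
        "continuous_on ({0<..} \<times> {0<..}) (\<lambda>(x,t). n x t) \<and>
        continuous_on ({0<..} \<times> {0<..}) (\<lambda>(x,t). nx x t) \<and>
        continuous_on ({0<..} \<times> {0<..}) (\<lambda>(x,t). nxx x t) \<and>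
        continuous_on ({0<..} \<times> {0<..}) (\<lambda>(x,t). nt x t) \<and>
        (\<forall>x>0. \<forall>t>0.
           ((\<lambda>y. n y t) has_real_derivative nx x t) (at x) \<and>
           ((\<lambda>y. nx y t) has_real_derivative nxx x t) (at x) \<and>
           ((\<lambda>s. n x s) has_real_derivative nt x t) (at t) \<and>
           ((\<lambda>y. kflux y (n y t) (nx y t)) has_real_derivative nt x t) (at x)) \<and>
        (\<forall>t>0. ((\<lambda>x. kflux x (n x t) (nx x t)) \<longlongrightarrow> 0) at_top)"
    using S[THEN conjunct2, THEN conjunct2, THEN conjunct2, THEN conjunct2, THEN conjunct2] by (elim exE) (rule that)
  have cont: "continuous_on ({0<..} \<times> {0<..}) (\<lambda>(x,t). n x t)" using H by (rule conjunct1)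
  have ders: "\<forall>x>0. \<forall>t>0.
           ((\<lambda>y. n y t) has_real_derivative nx x t) (at x) \<and>
           ((\<lambda>y. nx y t) has_real_derivative nxx x t) (at x) \<and>
           ((\<lambda>s. n x s) has_real_derivative nt x t) (at t) \<and>
           ((\<lambda>y. kflux y (n y t) (nx y t)) has_real_derivative nt x t) (at x)"
    using H[THEN conjunct2, THEN conjunct2, THEN conjunct2, THEN conjunct2] by (rule conjunct1)
  have pde: "\<forall>x>0. \<forall>t>0. nt x t = x\<^sup>2 * nxx x t + (x\<^sup>2 + 2 * n x t) * nx x t + (2*x - 2) * n x t"
  proof (intro allI impI)
    fix x t :: real assume "x > 0" "t > 0"
    then have d3: "((\<lambda>y. n y t) has_real_derivative nx x t) (at x)"
      "((\<lambda>y. nx y t) has_real_derivative nxx x t) (at x)"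
      "((\<lambda>y. kflux y (n y t) (nx y t)) has_real_derivative nt x t) (at x)"
      using ders by auto
    show "nt x t = x\<^sup>2 * nxx x t + (x\<^sup>2 + 2 * n x t) * nx x t + (2*x - 2) * n x t"
      by (rule pde_form[where n=n and t=t and nx=nx and x=x and nxx=nxx and nt=nt, OF d3])
  qed
  show ?thesis
  proof (intro allI impI)
    fix x0 T :: real assume x0: "x0 > 0" and T: "T > 0"
    have "\<exists>s x1. 0 < s \<and> s < T \<and> x1 > 0 \<and> n x1 s > 0"
    proof (rule ccontr)
      assume na: "\<not> ?thesis"
      then have z: "n x s = 0" if "0 < s" "s < T" "x > 0" for s x
      proof -
        have "n x s \<ge> 0" using nonneg that by simp
        moreover have "\<not> n x s > 0" using na that by blast
        ultimately show ?thesis by simp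
      qed
      define c where "c = (LINT x:{0<..}|lborel. \<bar>n x 0\<bar>)"
      have eq: "(LINT x:{0<..}|lborel. \<bar>n x s - n x 0\<bar>) = c" if "0 < s" "s < T" for s
        unfolding c_def by (rule set_lebesgue_integral_cong) (use z that in auto)
      have lim: "((\<lambda>s. LINT x:{0<..}|lborel. \<bar>n x s - n x 0\<bar>) \<longlongrightarrow> 0) (at_right 0)"
        using L1 by (metis at_within_Ici_at_right order_refl)
      have ev: "eventually (\<lambda>s. (LINT x:{0<..}|lborel. \<bar>n x s - n x 0\<bar>) = c) (at_right (0::real))"
        using eventually_at_right_real[OF T] by eventually_elim (use eq in auto)
      have "((\<lambda>s. c) \<longlongrightarrow> 0) (at_right (0::real))"
        using tendsto_cong[OF ev] lim by simp
      then have c0: "c = 0" by (simp add: tendsto_const_iff)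
      have ii: "integrable lborel (\<lambda>x. indicator {0<..} x *\<^sub>R n x 0)"
        using integ unfolding set_integrable_def by simp
      have ieq: "(\<lambda>x. indicator {0<..} x *\<^sub>R \<bar>n x 0\<bar>) = (\<lambda>x. \<bar>indicator {0<..} x *\<^sub>R n x 0\<bar>)"
        by (auto simp: indicator_def)
      have ii2: "integrable lborel (\<lambda>x. indicator {0<..} x *\<^sub>R \<bar>n x 0\<bar>)"
        unfolding ieq using integrable_abs[OF ii] by simp
      have "integral\<^sup>L lborel (\<lambda>x. indicator {0<..} x *\<^sub>R \<bar>n x 0\<bar>) = 0"
        using c0 by (simp add: c_def set_lebesgue_integral_def)
      then have "AE x in lborel. indicator {0<..} x *\<^sub>R \<bar>n x 0\<bar> = 0"
        using integral_nonneg_eq_0_iff_AE[OF ii2] by (simp add: indicator_def)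
      then have "AE x in lborel. x > 0 \<longrightarrow> n0 x = 0"
        using init by eventually_elim (auto simp: indicator_def split: if_splits)
      then show False using nonzero by simp
    qed
    then obtain s x1 where sx: "0 < s" "s < T" "x1 > 0" "n x1 s > 0" by blast
    show "n x0 T > 0"
    proof (rule comparison[OF cont _ _ _ pde nonneg x0 sx(3) sx(1) sx(2) sx(4)])
      show "\<forall>x>0. \<forall>t>0. ((\<lambda>y. n y t) has_real_derivative nx x t) (at x)" using ders by simp
      show "\<forall>x>0. \<forall>t>0. ((\<lambda>y. nx y t) has_real_derivative nxx x t) (at x)" using ders by simp
      show "\<forall>x>0. \<forall>t>0. ((\<lambda>s. n x s) has_real_derivative nt x t) (at t)" using ders by simp
    qed
  qed
qed

end
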